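(* Let $d\ge2$. For any $\theta_A,\theta_B\in L^2(\mathbb R^{d-1};\mathbb R)$ and any $\zeta\in C(\mathbb R;\mathbb R^n)$ with $\zeta'\in L^2(\mathbb R;\mathbb R^n)$, $$\|T_{\theta_A}\zeta-T_{\theta_B}\zeta\|_{L^2(\mathbb R^d;\mathbb R^n)}\le\|\theta_A-\theta_B\|_{L^2(\mathbb R^{d-1};\mathbb R)}\|\zeta'\|_{L^2(\mathbb R;\mathbb R^n)}.$$
   Context: Points of $\mathbb R^d$ are $(x,y)$ with $x\in\mathbb R$, $y\in\mathbb R^{d-1}$; for $\theta:\mathbb R^{d-1}\to\mathbb R$, $(T_\theta\zeta)(x,y)=\zeta(x-\theta(y))$. *)

theory Defs
  imports "HOL-Analysis.Analysis"
begin

text \<open>Points of R^d are pairs (x,y) with x real and y in R^(d-1), modelled by a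
  euclidean space 'm.  (T_theta zeta)(x,y) = zeta(x - theta y).\<close>
definition shiftT :: "('m \<Rightarrow> real) \<Rightarrow> (real \<Rightarrow> 'n) \<Rightarrow> real \<times> 'm \<Rightarrow> 'n" where
  "shiftT \<theta> \<zeta> = (\<lambda>(x, y). \<zeta> (x - \<theta> y))"

end

theory Submission
  imports Defs
begin

lemma cs_pt:
  fixes g :: "real \<Rightarrow> 'n::euclidean_space" and \<zeta> :: "real \<Rightarrow> 'n"
  assumes gm[measurable]: "g \<in> borel_measurable lborel" and uv: "u \<le> v"
    and hi: "(g has_integral (\<zeta> v - \<zeta> u)) {u..v}"
    and fin: "(\<integral>\<^sup>+t. ennreal ((norm (g t))\<^sup>2) \<partial>lborel) < \<infinity>"
  shows "ennreal ((norm (\<zeta> v - \<zeta> u))\<^sup>2) \<le> ennreal (v - u) * (\<integral>\<^sup>+t. ennreal ((norm (g t))\<^sup>2) * indicator {u..v} t \<partial>lborel)"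
proof -
  define h where "h t = ennreal (norm (g t)) * indicator {u..v} t" for t
  have "(\<integral>\<^sup>+t. h t * indicator {u..v} t \<partial>lborel)\<^sup>2 \<le> (\<integral>\<^sup>+t. (h t)\<^sup>2 \<partial>lborel) * (\<integral>\<^sup>+t. (indicator {u..v} t :: ennreal)\<^sup>2 \<partial>lborel)"
    by (rule Cauchy_Schwarz_nn_integral) (auto simp: h_def)
  moreover have "(\<lambda>t. h t * indicator {u..v} t) = h"
    by (auto simp: h_def fun_eq_iff indicator_def)
  moreover have "(\<lambda>t. (h t)\<^sup>2) = (\<lambda>t. ennreal ((norm (g t))\<^sup>2) * indicator {u..v} t)"
    by (auto simp: h_def fun_eq_iff indicator_def ennreal_power)
  moreover have "(\<integral>\<^sup>+t. (indicator {u..v} t :: ennreal)\<^sup>2 \<partial>lborel) = ennreal (v - u)"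
  proof -
    have "(\<lambda>t. (indicator {u..v} t :: ennreal)\<^sup>2) = indicator {u..v}"
      by (auto simp: fun_eq_iff indicator_def)
    then show ?thesis using uv by simp
  qed
  ultimately have cs: "(\<integral>\<^sup>+t. h t \<partial>lborel)\<^sup>2 \<le> ennreal (v - u) * (\<integral>\<^sup>+t. ennreal ((norm (g t))\<^sup>2) * indicator {u..v} t \<partial>lborel)"
    by (simp add: mult.commute)
  have "(\<integral>\<^sup>+t. ennreal ((norm (g t))\<^sup>2) * indicator {u..v} t \<partial>lborel) \<le> (\<integral>\<^sup>+t. ennreal ((norm (g t))\<^sup>2) \<partial>lborel)"
    by (intro nn_integral_mono) (auto simp: indicator_def)
  with fin cs have "(\<integral>\<^sup>+t. h t \<partial>lborel)\<^sup>2 < \<infinity>"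
  proof -
    have "ennreal (v - u) * (\<integral>\<^sup>+t. ennreal ((norm (g t))\<^sup>2) * indicator {u..v} t \<partial>lborel) < \<infinity>"
      using fin \<open>_ \<le> (\<integral>\<^sup>+t. ennreal ((norm (g t))\<^sup>2) \<partial>lborel)\<close> by (auto simp: ennreal_mult_less_top intro: le_less_trans)
    with cs show ?thesis by (rule le_less_trans)
  qed
  then have hfin: "(\<integral>\<^sup>+t. h t \<partial>lborel) < \<infinity>"
    by (simp add: power_less_top_ennreal)
  have nh: "ennreal (norm (indicator {u..v} t *\<^sub>R g t)) = h t" for t
    by (auto simp: h_def indicator_def)
  have int: "integrable lborel (\<lambda>t. indicator {u..v} t *\<^sub>R g t)"
    by (rule integrableI_bounded) (use hfin nh in auto)
  then have si: "set_integrable lborel {u..v} g" by (simp add: set_integrable_def)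
  have "(LINT t:{u..v}|lborel. g t) = \<zeta> v - \<zeta> u"
    using set_borel_integral_eq_integral(2)[OF si] hi by (simp add: integral_unique)
  then have "norm (\<zeta> v - \<zeta> u) \<le> (\<integral>\<^sup>+t. h t \<partial>lborel)"
    using integral_norm_bound_ennreal[OF int] nh by (simp add: set_lebesgue_integral_def)
  then have "(ennreal (norm (\<zeta> v - \<zeta> u)))\<^sup>2 \<le> (\<integral>\<^sup>+t. h t \<partial>lborel)\<^sup>2"
    by (rule power_mono) simp
  with cs show ?thesis by (simp add: ennreal_power)
qed

lemma shift_core:
  fixes g :: "real \<Rightarrow> 'n::euclidean_space" and \<zeta> :: "real \<Rightarrow> 'n"
  assumes gm[measurable]: "g \<in> borel_measurable lborel" and ab: "a \<le> b"
    and hi: "\<And>u v. u \<le> v \<Longrightarrow> (g has_integral (\<zeta> v - \<zeta> u)) {u..v}"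
    and fin: "(\<integral>\<^sup>+t. ennreal ((norm (g t))\<^sup>2) \<partial>lborel) < \<infinity>"
  shows "(\<integral>\<^sup>+x. ennreal ((norm (\<zeta> (x - a) - \<zeta> (x - b)))\<^sup>2) \<partial>lborel)
     \<le> ennreal ((b - a)\<^sup>2) * (\<integral>\<^sup>+t. ennreal ((norm (g t))\<^sup>2) \<partial>lborel)"
proof -
  define F where "F x t = ennreal ((norm (g t))\<^sup>2) * indicator {x - b..x - a} t" for x t
  have Fm: "case_prod F \<in> borel_measurable (lborel \<Otimes>\<^sub>M lborel)"
  proof -
    have "case_prod F = (\<lambda>p. ennreal ((norm (g (snd p)))\<^sup>2) * indicator {p. fst p - b \<le> snd p \<and> snd p \<le> fst p - a} p)"
      by (auto simp: F_def fun_eq_iff indicator_def)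
    also have "\<dots> \<in> borel_measurable (lborel \<Otimes>\<^sub>M lborel)"
      by measurable
    finally show ?thesis .
  qed
  have "(\<integral>\<^sup>+x. ennreal ((norm (\<zeta> (x - a) - \<zeta> (x - b)))\<^sup>2) \<partial>lborel)
      \<le> (\<integral>\<^sup>+x. ennreal (b - a) * (\<integral>\<^sup>+t. F x t \<partial>lborel) \<partial>lborel)"
  proof (intro nn_integral_mono)
    fix x
    show "ennreal ((norm (\<zeta> (x - a) - \<zeta> (x - b)))\<^sup>2) \<le> ennreal (b - a) * (\<integral>\<^sup>+t. F x t \<partial>lborel)"
      using cs_pt[OF gm _ hi[of "x - b" "x - a"] fin] ab by (simp add: F_def)
  qed
  also have "\<dots> = ennreal (b - a) * (\<integral>\<^sup>+x. (\<integral>\<^sup>+t. F x t \<partial>lborel) \<partial>lborel)"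
    by (rule nn_integral_cmult) (use Fm in measurable)
  also have "(\<integral>\<^sup>+x. (\<integral>\<^sup>+t. F x t \<partial>lborel) \<partial>lborel) = (\<integral>\<^sup>+t. (\<integral>\<^sup>+x. F x t \<partial>lborel) \<partial>lborel)"
    by (rule lborel_pair.Fubini'[symmetric, OF Fm])
  also have "\<dots> = (\<integral>\<^sup>+t. ennreal (b - a) * ennreal ((norm (g t))\<^sup>2) \<partial>lborel)"
  proof (intro nn_integral_cong)
    fix t
    have "(\<integral>\<^sup>+x. F x t \<partial>lborel) = (\<integral>\<^sup>+x. ennreal ((norm (g t))\<^sup>2) * indicator {t + a..t + b} x \<partial>lborel)"
      by (intro nn_integral_cong) (auto simp: F_def indicator_def)
    also have "\<dots> = ennreal ((norm (g t))\<^sup>2) * ennreal (b - a)"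
      using ab by (subst nn_integral_cmult) auto
    finally show "(\<integral>\<^sup>+x. F x t \<partial>lborel) = ennreal (b - a) * ennreal ((norm (g t))\<^sup>2)"
      by (simp add: mult.commute)
  qed
  also have "\<dots> = ennreal (b - a) * (\<integral>\<^sup>+t. ennreal ((norm (g t))\<^sup>2) \<partial>lborel)"
    by (rule nn_integral_cmult) measurable
  finally show ?thesis
    using ab by (simp add: mult.assoc[symmetric] ennreal_mult[symmetric] power2_eq_square)
qed

lemma shift_core2:
  fixes g :: "real \<Rightarrow> 'n::euclidean_space" and \<zeta> :: "real \<Rightarrow> 'n"
  assumes gm[measurable]: "g \<in> borel_measurable lborel"
    and hi: "\<And>u v. u \<le> v \<Longrightarrow> (g has_integral (\<zeta> v - \<zeta> u)) {u..v}"
    and fin: "(\<integral>\<^sup>+t. ennreal ((norm (g t))\<^sup>2) \<partial>lborel) < \<infinity>"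
  shows "(\<integral>\<^sup>+x. ennreal ((norm (\<zeta> (x - a) - \<zeta> (x - b)))\<^sup>2) \<partial>lborel)
     \<le> ennreal ((a - b)\<^sup>2) * (\<integral>\<^sup>+t. ennreal ((norm (g t))\<^sup>2) \<partial>lborel)"
proof (cases "a \<le> b")
  case True
  then show ?thesis using shift_core[OF gm True hi fin] by (simp add: power2_commute)
next
  case False
  then have "b \<le> a" by simp
  from shift_core[OF gm this hi fin] show ?thesis by (simp add: norm_minus_commute)
qed

lemma main_borel:
  fixes \<theta>A \<theta>B :: "'m::euclidean_space \<Rightarrow> real"
    and \<zeta> g :: "real \<Rightarrow> 'n::euclidean_space"
  assumes mA[measurable]: "\<theta>A \<in> borel_measurable borel" and iA: "integrable lborel (\<lambda>y. (\<theta>A y)\<^sup>2)"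
    and mB[measurable]: "\<theta>B \<in> borel_measurable borel" and iB: "integrable lborel (\<lambda>y. (\<theta>B y)\<^sup>2)"
    and cz: "continuous_on UNIV \<zeta>"
    and hi: "\<And>a b. a \<le> b \<Longrightarrow> (g has_integral (\<zeta> b - \<zeta> a)) {a..b}"
    and gm[measurable]: "g \<in> borel_measurable borel" and ig: "integrable lborel (\<lambda>x. (norm (g x))\<^sup>2)"
  shows "integrable lborel (\<lambda>p. (norm (shiftT \<theta>A \<zeta> p - shiftT \<theta>B \<zeta> p))\<^sup>2)
    \<and> (LINT p|lborel. (norm (shiftT \<theta>A \<zeta> p - shiftT \<theta>B \<zeta> p))\<^sup>2)
      \<le> (LINT y|lborel. (\<theta>A y - \<theta>B y)\<^sup>2) * (LINT x|lborel. (norm (g x))\<^sup>2)"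
proof -
  have zm[measurable]: "\<zeta> \<in> borel_measurable borel"
    using cz by (rule borel_measurable_continuous_onI)
  define G where "G = (LINT x|lborel. (norm (g x))\<^sup>2)"
  define T where "T = (LINT y|lborel. (\<theta>A y - \<theta>B y)\<^sup>2)"
  have G0: "0 \<le> G" unfolding G_def by simp
  have T0: "0 \<le> T" unfolding T_def by simp
  have Gn: "(\<integral>\<^sup>+t. ennreal ((norm (g t))\<^sup>2) \<partial>lborel) = ennreal G"
    unfolding G_def by (rule nn_integral_eq_integral[OF ig]) auto
  have iT: "integrable lborel (\<lambda>y. (\<theta>A y - \<theta>B y)\<^sup>2)"
  proof (rule Bochner_Integration.integrable_bound[where f="\<lambda>y. 2 * (\<theta>A y)\<^sup>2 + 2 * (\<theta>B y)\<^sup>2"])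
    show "integrable lborel (\<lambda>y. 2 * (\<theta>A y)\<^sup>2 + 2 * (\<theta>B y)\<^sup>2)"
      using iA iB by auto
    show "(\<lambda>y. (\<theta>A y - \<theta>B y)\<^sup>2) \<in> borel_measurable lborel" by measurable
    show "AE y in lborel. norm ((\<theta>A y - \<theta>B y)\<^sup>2) \<le> norm (2 * (\<theta>A y)\<^sup>2 + 2 * (\<theta>B y)\<^sup>2)"
    proof (intro AE_I2)
      fix y
      have "(\<theta>A y - \<theta>B y)\<^sup>2 \<le> 2 * (\<theta>A y)\<^sup>2 + 2 * (\<theta>B y)\<^sup>2"
        using zero_le_power2[of "\<theta>A y + \<theta>B y"] by (simp add: power2_eq_square algebra_simps)
      then show "norm ((\<theta>A y - \<theta>B y)\<^sup>2) \<le> norm (2 * (\<theta>A y)\<^sup>2 + 2 * (\<theta>B y)\<^sup>2)"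
        by simp
    qed
  qed
  have Tn: "(\<integral>\<^sup>+y. ennreal ((\<theta>A y - \<theta>B y)\<^sup>2) \<partial>lborel) = ennreal T"
    unfolding T_def by (rule nn_integral_eq_integral[OF iT]) auto
  define F where "F p = (norm (shiftT \<theta>A \<zeta> p - shiftT \<theta>B \<zeta> p))\<^sup>2" for p
  have Fm: "(\<lambda>p. ennreal (F p)) \<in> borel_measurable (lborel \<Otimes>\<^sub>M lborel :: (real \<times> 'm) measure)"
    unfolding F_def shiftT_def by (simp add: case_prod_beta') measurable
  have Fm2: "F \<in> borel_measurable (lborel :: (real \<times> 'm) measure)"
    unfolding F_def shiftT_def lborel_prod[symmetric] by (simp add: case_prod_beta') measurable
  have "(\<integral>\<^sup>+p. ennreal (F p) \<partial>lborel) = (\<integral>\<^sup>+p. ennreal (F p) \<partial>(lborel \<Otimes>\<^sub>M lborel :: (real \<times> 'm) measure))"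
    by (simp add: lborel_prod)
  also have "\<dots> = (\<integral>\<^sup>+y. (\<integral>\<^sup>+x. ennreal (F (x, y)) \<partial>lborel) \<partial>lborel)"
    by (rule lborel_pair.nn_integral_snd[symmetric, OF Fm])
  also have "\<dots> \<le> (\<integral>\<^sup>+y. ennreal ((\<theta>A y - \<theta>B y)\<^sup>2) * ennreal G \<partial>lborel)"
  proof (intro nn_integral_mono)
    fix y
    show "(\<integral>\<^sup>+x. ennreal (F (x, y)) \<partial>lborel) \<le> ennreal ((\<theta>A y - \<theta>B y)\<^sup>2) * ennreal G"
      using shift_core2[of g \<zeta> "\<theta>A y" "\<theta>B y"] hi Gn
      by (simp add: F_def shiftT_def)
  qed
  also have "\<dots> = ennreal T * ennreal G"
    by (subst nn_integral_multc) (auto simp: Tn)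
  also have "\<dots> = ennreal (T * G)" using T0 G0 by (simp add: ennreal_mult)
  finally have le: "(\<integral>\<^sup>+p. ennreal (F p) \<partial>lborel) \<le> ennreal (T * G)" .
  have iF: "integrable lborel F"
  proof (rule integrableI_bounded)
    show "F \<in> borel_measurable lborel" by (rule Fm2)
    have "(\<integral>\<^sup>+p. ennreal (norm (F p)) \<partial>lborel) = (\<integral>\<^sup>+p. ennreal (F p) \<partial>lborel)"
      by (simp add: F_def)
    then show "(\<integral>\<^sup>+p. ennreal (norm (F p)) \<partial>lborel) < \<infinity>"
      using le by (simp add: le_less_trans)
  qed
  have "ennreal (LINT p|lborel. F p) = (\<integral>\<^sup>+p. ennreal (F p) \<partial>lborel)"
    by (rule nn_integral_eq_integral[OF iF, symmetric]) (auto simp: F_def)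
  with le have "ennreal (LINT p|lborel. F p) \<le> ennreal (T * G)"
    by simp
  then have "(LINT p|lborel. F p) \<le> T * G"
    using T0 G0 by (simp add: ennreal_le_iff)
  with iF show ?thesis unfolding F_def T_def G_def by simp
qed

lemma ex_borel_vec:
  fixes g :: "'a::euclidean_space \<Rightarrow> 'n::euclidean_space"
  assumes gm: "g \<in> borel_measurable lebesgue"
  shows "\<exists>g'\<in>borel_measurable lborel. AE x in lborel. g x = g' x"
proof -
  have "\<forall>b\<in>Basis. \<exists>h\<in>borel_measurable lborel. AE x in lborel. g x \<bullet> b = h x"
  proof
    fix b :: 'n
    have "(\<lambda>x. g x \<bullet> b) \<in> borel_measurable lebesgue" using gm by measurable
    then show "\<exists>h\<in>borel_measurable lborel. AE x in lborel. g x \<bullet> b = h x"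
      by (rule completion_ex_borel_measurable_real)
  qed
  then obtain H where H: "\<And>b. b \<in> Basis \<Longrightarrow> H b \<in> borel_measurable lborel"
    "\<And>b. b \<in> Basis \<Longrightarrow> AE x in lborel. g x \<bullet> b = H b x"
    by metis
  define g' where "g' x = (\<Sum>b\<in>Basis. H b x *\<^sub>R b)" for x
  have "g' \<in> borel_measurable lborel"
    unfolding g'_def using H(1) by (intro borel_measurable_sum borel_measurable_scaleR) auto
  moreover have "AE x in lborel. g x = g' x"
  proof -
    have "AE x in lborel. \<forall>b\<in>Basis. g x \<bullet> b = H b x"
      by (rule AE_finite_allI) (auto intro: H(2))
    then show ?thesis
    proof (rule AE_mp, intro AE_I2 impI)
      fix x assume "\<forall>b\<in>Basis. g x \<bullet> b = H b x"
      then have "g' x = (\<Sum>b\<in>Basis. (g x \<bullet> b) *\<^sub>R b)" by (simp add: g'_def)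
      then show "g x = g' x" by (simp add: euclidean_representation)
    qed
  qed
  ultimately show ?thesis by blast
qed

lemma transfer_real:
  fixes f f' :: "'a::euclidean_space \<Rightarrow> real"
  assumes m1: "f \<in> borel_measurable lebesgue" and m2: "f' \<in> borel_measurable lborel"
    and ae: "AE x in lebesgue. f x = f' x"
  shows "(integrable lebesgue f \<longleftrightarrow> integrable lborel f') \<and> integral\<^sup>L lebesgue f = integral\<^sup>L lborel f'"
proof -
  have m2': "f' \<in> borel_measurable lebesgue" by (rule measurable_completion[OF m2])
  have "integrable lebesgue f \<longleftrightarrow> integrable lebesgue f'" by (rule integrable_cong_AE[OF m1 m2' ae])
  moreover have "integrable lebesgue f' \<longleftrightarrow> integrable lborel f'" by (rule integrable_completion[OF m2])
  moreover have "integral\<^sup>L lebesgue f = integral\<^sup>L lebesgue f'" by (rule integral_cong_AE[OF m1 m2' ae])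
  moreover have "integral\<^sup>L lebesgue f' = integral\<^sup>L lborel f'" by (rule integral_completion[OF m2])
  ultimately show ?thesis by simp
qed

theorem corollary3p5:
  fixes \<theta>A \<theta>B :: "'m::euclidean_space \<Rightarrow> real"
    and \<zeta> g :: "real \<Rightarrow> 'n::euclidean_space"
  assumes "\<theta>A \<in> borel_measurable lebesgue" "integrable lebesgue (\<lambda>y. (\<theta>A y)\<^sup>2)"
    and "\<theta>B \<in> borel_measurable lebesgue" "integrable lebesgue (\<lambda>y. (\<theta>B y)\<^sup>2)"
    and "continuous_on UNIV \<zeta>"
    and "\<And>a b. a \<le> b \<Longrightarrow> (g has_integral (\<zeta> b - \<zeta> a)) {a..b}"
    and "g \<in> borel_measurable lebesgue" "integrable lebesgue (\<lambda>x. (norm (g x))\<^sup>2)"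
  shows "(\<lambda>p. shiftT \<theta>A \<zeta> p - shiftT \<theta>B \<zeta> p) \<in> borel_measurable lebesgue
    \<and> integrable lebesgue (\<lambda>p. (norm (shiftT \<theta>A \<zeta> p - shiftT \<theta>B \<zeta> p))\<^sup>2)
    \<and> sqrt (LINT p|lebesgue. (norm (shiftT \<theta>A \<zeta> p - shiftT \<theta>B \<zeta> p))\<^sup>2)
      \<le> sqrt (LINT y|lebesgue. (\<theta>A y - \<theta>B y)\<^sup>2) * sqrt (LINT x|lebesgue. (norm (g x))\<^sup>2)"
proof -
  note mA = assms(1) and iA = assms(2) and mB = assms(3) and iB = assms(4)
    and cz = assms(5) and hi = assms(6) and gm = assms(7) and ig = assms(8)
  have zm[measurable]: "\<zeta> \<in> borel_measurable borel"
    using cz by (rule borel_measurable_continuous_onI)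
  obtain A where A[measurable]: "A \<in> borel_measurable lborel" and aeA: "AE y in lborel. \<theta>A y = A y"
    using completion_ex_borel_measurable_real[OF mA] by blast
  obtain B where B[measurable]: "B \<in> borel_measurable lborel" and aeB: "AE y in lborel. \<theta>B y = B y"
    using completion_ex_borel_measurable_real[OF mB] by blast
  obtain g' where g'[measurable]: "g' \<in> borel_measurable lborel" and aeg: "AE x in lborel. g x = g' x"
    using ex_borel_vec[OF gm] by blast
  have Ab: "A \<in> borel_measurable borel" using A by simp
  have Bb: "B \<in> borel_measurable borel" using B by simp
  have g'b: "g' \<in> borel_measurable borel" using g' by simp
  obtain NA where NA: "NA \<in> null_sets lborel" "{y \<in> space lborel. \<not> \<theta>A y = A y} \<subseteq> NA"
    using aeA unfolding eventually_ae_filter by blast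
  obtain NB where NB: "NB \<in> null_sets lborel" "{y \<in> space lborel. \<not> \<theta>B y = B y} \<subseteq> NB"
    using aeB unfolding eventually_ae_filter by blast
  obtain Ng where Ng: "Ng \<in> null_sets lborel" "{x \<in> space lborel. \<not> g x = g' x} \<subseteq> Ng"
    using aeg unfolding eventually_ae_filter by blast
  have hi': "(g' has_integral (\<zeta> b - \<zeta> a)) {a..b}" if "a \<le> b" for a b
  proof (rule has_integral_spike[OF _ _ hi[OF that]])
    show "negligible Ng" using Ng(1) by (simp add: negligible_iff_null_sets null_sets_completionI)
    show "\<And>x. x \<in> {a..b} - Ng \<Longrightarrow> g' x = g x" using Ng(2) by force
  qed
  have "AE x in lebesgue. (norm (g x))\<^sup>2 = (norm (g' x))\<^sup>2"
    using AE_completion[OF aeg] by auto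
  from transfer_real[OF _ _ this] gm
  have ig': "integrable lborel (\<lambda>x. (norm (g' x))\<^sup>2)"
    and Ieqg: "(LINT x|lebesgue. (norm (g x))\<^sup>2) = (LINT x|lborel. (norm (g' x))\<^sup>2)"
    using ig by auto
  have "AE x in lebesgue. (\<theta>A x)\<^sup>2 = (A x)\<^sup>2"
    using AE_completion[OF aeA] by auto
  from transfer_real[OF _ _ this] mA iA have iA': "integrable lborel (\<lambda>y. (A y)\<^sup>2)" by auto
  have "AE x in lebesgue. (\<theta>B x)\<^sup>2 = (B x)\<^sup>2"
    using AE_completion[OF aeB] by auto
  from transfer_real[OF _ _ this] mB iB have iB': "integrable lborel (\<lambda>y. (B y)\<^sup>2)" by auto
  have "AE x in lebesgue. (\<theta>A x - \<theta>B x)\<^sup>2 = (A x - B x)\<^sup>2"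
    using AE_completion[OF aeA] AE_completion[OF aeB] by auto
  from transfer_real[OF _ _ this] mA mB
  have IeqT: "(LINT y|lebesgue. (\<theta>A y - \<theta>B y)\<^sup>2) = (LINT y|lborel. (A y - B y)\<^sup>2)" by auto
  have main: "integrable lborel (\<lambda>p. (norm (shiftT A \<zeta> p - shiftT B \<zeta> p))\<^sup>2)
    \<and> (LINT p|lborel. (norm (shiftT A \<zeta> p - shiftT B \<zeta> p))\<^sup>2)
      \<le> (LINT y|lborel. (A y - B y)\<^sup>2) * (LINT x|lborel. (norm (g' x))\<^sup>2)"
    by (rule main_borel[OF Ab iA' Bb iB' cz hi' g'b ig'])
  have Nnull: "(UNIV :: real set) \<times> (NA \<union> NB) \<in> null_sets (lborel :: (real \<times> 'm) measure)"
  proof -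
    have s: "NA \<union> NB \<in> null_sets lborel" using NA(1) NB(1) by auto
    then have "(UNIV :: real set) \<times> (NA \<union> NB) \<in> null_sets (lborel \<Otimes>\<^sub>M lborel)"
      by (intro lborel.times_in_null_sets2) auto
    then show ?thesis by (simp add: lborel_prod)
  qed
  have aeP: "AE p in (lborel :: (real \<times> 'm) measure). shiftT \<theta>A \<zeta> p = shiftT A \<zeta> p \<and> shiftT \<theta>B \<zeta> p = shiftT B \<zeta> p"
  proof (rule AE_I'[OF Nnull])
    show "{p \<in> space lborel. \<not> (shiftT \<theta>A \<zeta> p = shiftT A \<zeta> p \<and> shiftT \<theta>B \<zeta> p = shiftT B \<zeta> p)} \<subseteq> UNIV \<times> (NA \<union> NB)"
      using NA(2) NB(2) by (force simp: shiftT_def)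
  qed
  then have aeL: "AE p in lebesgue. shiftT \<theta>A \<zeta> p = shiftT A \<zeta> p \<and> shiftT \<theta>B \<zeta> p = shiftT B \<zeta> p"
    by (rule AE_completion)
  have Dm': "(\<lambda>p. shiftT A \<zeta> p - shiftT B \<zeta> p) \<in> borel_measurable (lborel :: (real \<times> 'm) measure)"
    unfolding shiftT_def lborel_prod[symmetric] by (simp add: case_prod_beta') measurable
  have Dm: "(\<lambda>p. shiftT \<theta>A \<zeta> p - shiftT \<theta>B \<zeta> p) \<in> borel_measurable lebesgue"
    by (rule borel_measurable_AE[OF measurable_completion[OF Dm']]) (use aeL in auto)
  have Fm': "(\<lambda>p. (norm (shiftT A \<zeta> p - shiftT B \<zeta> p))\<^sup>2) \<in> borel_measurable (lborel :: (real \<times> 'm) measure)"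
    using Dm' by measurable
  have Fm: "(\<lambda>p. (norm (shiftT \<theta>A \<zeta> p - shiftT \<theta>B \<zeta> p))\<^sup>2) \<in> borel_measurable lebesgue"
    using Dm by measurable
  have "AE p in lebesgue. (norm (shiftT \<theta>A \<zeta> p - shiftT \<theta>B \<zeta> p))\<^sup>2 = (norm (shiftT A \<zeta> p - shiftT B \<zeta> p))\<^sup>2"
    using aeL by auto
  from transfer_real[OF Fm Fm' this] main
  have iF: "integrable lebesgue (\<lambda>p. (norm (shiftT \<theta>A \<zeta> p - shiftT \<theta>B \<zeta> p))\<^sup>2)"
    and leF: "(LINT p|lebesgue. (norm (shiftT \<theta>A \<zeta> p - shiftT \<theta>B \<zeta> p))\<^sup>2)
      \<le> (LINT y|lebesgue. (\<theta>A y - \<theta>B y)\<^sup>2) * (LINT x|lebesgue. (norm (g x))\<^sup>2)"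
    by (auto simp: IeqT Ieqg)
  from leF have "sqrt (LINT p|lebesgue. (norm (shiftT \<theta>A \<zeta> p - shiftT \<theta>B \<zeta> p))\<^sup>2)
      \<le> sqrt (LINT y|lebesgue. (\<theta>A y - \<theta>B y)\<^sup>2) * sqrt (LINT x|lebesgue. (norm (g x))\<^sup>2)"
    by (simp add: real_sqrt_mult[symmetric])
  with Dm iF show ?thesis by blast
qed

end
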